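(* Let $A$ and $B$ be commutative associative unital algebras over $\mathbb{C}$ or $\mathbb{R}$, let $\mathbf{f}_1,\dots,\mathbf{f}_r\colon A\to B$ be unital algebra homomorphisms, and let $n_1,\dots,n_r\in\mathbb{Z}$. Put $\mathbf{f}=\sum_{\alpha}n_\alpha\mathbf{f}_\alpha$, $p=\sum_{n_\alpha>0}n_\alpha$ and $q=-\sum_{n_\alpha<0}n_\alpha$. Then $\mathbf{f}$ is a $p|q$-homomorphism, with $\mathbf{f}(1)=\sum_\alpha n_\alpha=p-q$.
   Context: For a linear map $\mathbf{f}\colon A\to B$, its characteristic function is the formal power series $R(\mathbf{f},a,z)=\exp\bigl(\mathbf{f}(\ln(1+az))\bigr)\in B[[z]]$, where $\ln(1+az)=\sum_{k\ge1}(-1)^{k-1}a^kz^k/k$ and $\mathbf{f}$ is applied coefficientwise. A linear map $\mathbf{f}$ is called a $p|q$-homomorphism if for every $a\in A$, $R(\mathbf{f},a,z)$ is a rational function of $z$ representable as a ratio $P_a(z)/Q_a(z)$ of polynomials $P_a,Q_a\in B[z]$ of degrees $p$ and $q$ respectively, with $Q_a(0)=1$ (the ratio understood as a formal power series). *)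

theory Defs
  imports Complex_Main "HOL-Computational_Algebra.Polynomial_FPS"
begin

text \<open>Algebras over R (complex algebras are in particular real algebras).
  Coefficientwise application of a map to a formal power series.\<close>
definition fps_map_coeffs :: "('a \<Rightarrow> 'b) \<Rightarrow> 'a fps \<Rightarrow> 'b fps" where
  "fps_map_coeffs f g = Abs_fps (\<lambda>k. f (fps_nth g k))"

definition fps_ln1p :: "'a::real_algebra_1 \<Rightarrow> 'a fps" where
  "fps_ln1p a = Abs_fps (\<lambda>k. if k = 0 then 0
                             else ((-1) ^ (k - 1) / real k) *\<^sub>R a ^ k)"

text \<open>Exponential of a formal power series (meant for series with zero
  constant term, where the defining sum is finite in each coefficient):
  exp g = sum_k g^k / k!.\<close>
definition fps_Exp :: "'b::{comm_ring_1,real_algebra_1} fps \<Rightarrow> 'b fps" where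
  "fps_Exp g = Abs_fps (\<lambda>n. \<Sum>k\<le>n. (1 / fact k) *\<^sub>R (fps_nth (g ^ k) n))"

definition char_fun :: "('a::real_algebra_1 \<Rightarrow> 'b::{comm_ring_1,real_algebra_1}) \<Rightarrow> 'a \<Rightarrow> 'b fps" where
  "char_fun f a = fps_Exp (fps_map_coeffs f (fps_ln1p a))"

text \<open>p|q-homomorphism: linear map such that every R(f,a,z) equals P_a/Q_a with
  deg P_a <= p, deg Q_a <= q, Q_a(0) = 1 (ratio as power series, i.e. R * Q = P).\<close>
definition pq_hom :: "nat \<Rightarrow> nat \<Rightarrow> ('a::real_algebra_1 \<Rightarrow> 'b::{comm_ring_1,real_algebra_1}) \<Rightarrow> bool" where
  "pq_hom p q f \<longleftrightarrow> linear f \<and>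
     (\<forall>a. \<exists>P Q :: 'b poly. degree P \<le> p \<and> degree Q \<le> q \<and> coeff Q 0 = 1 \<and>
            char_fun f a * fps_of_poly Q = fps_of_poly P)"

definition unital_alg_hom :: "('a::real_algebra_1 \<Rightarrow> 'b::real_algebra_1) \<Rightarrow> bool" where
  "unital_alg_hom f \<longleftrightarrow> linear f \<and> (\<forall>x y. f (x * y) = f x * f y) \<and> f 1 = 1"

end

theory Submission
  imports Defs
begin

unbundle fps_syntax

definition trS :: "'b::{comm_ring_1,real_algebra_1} fps \<Rightarrow> nat \<Rightarrow> 'b fps" where
  "trS g N = (\<Sum>k\<le>N. fps_const (of_real (inverse (fact k))) * g ^ k)"

lemma Exp_nth_trS:
  fixes g :: "'b::{comm_ring_1,real_algebra_1} fps"
  assumes g0: "g $ 0 = 0" and nN: "n \<le> N"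
  shows "fps_Exp g $ n = trS g N $ n"
proof -
  have "trS g N $ n = (\<Sum>k\<le>N. of_real (inverse (fact k)) * (g ^ k $ n))"
    by (simp add: trS_def fps_sum_nth)
  also have "\<dots> = (\<Sum>k\<le>n. of_real (inverse (fact k)) * (g ^ k $ n))"
    using startsby_zero_power_prefix[OF g0] nN
    by (intro sum.mono_neutral_right) auto
  also have "\<dots> = fps_Exp g $ n"
    by (simp add: fps_Exp_def scaleR_conv_of_real divide_inverse)
  finally show ?thesis ..
qed

lemma deriv_trS:
  fixes g :: "'b::{comm_ring_1,real_algebra_1} fps"
  shows "fps_deriv (trS g (Suc N)) = fps_deriv g * trS g N"
proof -
  have c: "of_real (inverse (fact (Suc k))) * (of_nat (Suc k) :: 'b) = of_real (inverse (fact k))" for k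
  proof -
    have "inverse (fact (Suc k)) * real (Suc k) = inverse (fact k)"
      by (simp add: fact_Suc field_simps del: of_nat_Suc)
    then have "(of_real (inverse (fact (Suc k)) * real (Suc k)) :: 'b) = of_real (inverse (fact k))"
      by (rule arg_cong)
    then show ?thesis by (metis of_real_mult of_real_of_nat_eq)
  qed
  have "fps_deriv (trS g (Suc N)) = (\<Sum>k\<le>Suc N. fps_const (of_real (inverse (fact k))) * (fps_const (of_nat k) * fps_deriv g * g ^ (k - 1)))"
    by (simp only: trS_def fps_deriv_sum fps_deriv_mult_const_left fps_deriv_power)
  also have "\<dots> = (\<Sum>k\<le>N. fps_const (of_real (inverse (fact (Suc k)))) * (fps_const (of_nat (Suc k)) * fps_deriv g * g ^ k))"
    by (subst sum.atMost_Suc_shift) (simp del: sum.atMost_Suc of_nat_Suc fact_Suc)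
  also have "\<dots> = (\<Sum>k\<le>N. fps_deriv g * (fps_const (of_real (inverse (fact (Suc k))) * of_nat (Suc k)) * g ^ k))"
    by (intro sum.cong refl) (simp add: algebra_simps del: of_nat_Suc fps_const_mult flip: fps_const_mult)
  also have "\<dots> = fps_deriv g * trS g N"
    by (simp only: c trS_def sum_distrib_left)
  finally show ?thesis .
qed

lemma Exp_0: "fps_Exp (g :: 'b::{comm_ring_1,real_algebra_1} fps) $ 0 = 1"
  by (simp add: fps_Exp_def)

lemma deriv_Exp:
  fixes g :: "'b::{comm_ring_1,real_algebra_1} fps"
  assumes g0: "g $ 0 = 0"
  shows "fps_deriv (fps_Exp g) = fps_deriv g * fps_Exp g"
proof (rule fps_ext)
  fix n
  have "fps_deriv (fps_Exp g) $ n = fps_deriv (trS g (Suc n)) $ n"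
    using Exp_nth_trS[OF g0, of "Suc n" "Suc n"] by simp
  also have "\<dots> = (fps_deriv g * trS g n) $ n" by (simp add: deriv_trS)
  also have "\<dots> = (fps_deriv g * fps_Exp g) $ n"
    unfolding fps_mult_nth
    by (intro sum.cong refl) (simp add: Exp_nth_trS[OF g0, of _ n])
  finally show "fps_deriv (fps_Exp g) $ n = (fps_deriv g * fps_Exp g) $ n" .
qed

lemma ode_unique:
  fixes Y Z h :: "'b::{comm_ring_1,real_algebra_1} fps"
  assumes "fps_deriv Y = h * Y" "fps_deriv Z = h * Z" "Y $ 0 = Z $ 0"
  shows "Y = Z"
proof (rule fps_ext)
  fix n show "Y $ n = Z $ n"
  proof (induction n rule: less_induct)
    case (less n)
    show ?case
    proof (cases n)
      case 0 then show ?thesis using assms by simp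
    next
      case (Suc m)
      have "of_nat (Suc m) * Y $ Suc m = (h * Y) $ m"
        using arg_cong[OF assms(1), of "\<lambda>F. F $ m"] by simp
      also have "\<dots> = (h * Z) $ m"
        unfolding fps_mult_nth using less Suc by (intro sum.cong refl) auto
      also have "\<dots> = of_nat (Suc m) * Z $ Suc m"
        using arg_cong[OF assms(2), of "\<lambda>F. F $ m"] by simp
      finally have e: "of_nat (Suc m) * Y $ Suc m = of_nat (Suc m) * Z $ Suc m" .
      have inv: "(of_real (inverse (real (Suc m))) :: 'b) * of_nat (Suc m) = 1"
        by (metis of_real_1 of_real_mult of_real_of_nat_eq left_inverse of_nat_eq_0_iff nat.distinct(1)) 
      have "Y $ Suc m = of_real (inverse (real (Suc m))) * (of_nat (Suc m) * Y $ Suc m)"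
        by (simp only: mult.assoc[symmetric] inv) simp
      also have "\<dots> = Z $ Suc m" using e
        by (simp only: mult.assoc[symmetric] inv) simp
      finally show ?thesis using Suc by simp
    qed
  qed
qed

lemma Exp_add:
  fixes g h :: "'b::{comm_ring_1,real_algebra_1} fps"
  assumes "g $ 0 = 0" "h $ 0 = 0"
  shows "fps_Exp (g + h) = fps_Exp g * fps_Exp h"
proof (rule ode_unique)
  show "fps_deriv (fps_Exp (g + h)) = fps_deriv (g + h) * fps_Exp (g + h)"
    using assms by (intro deriv_Exp) simp
  show "fps_deriv (fps_Exp g * fps_Exp h) = fps_deriv (g + h) * (fps_Exp g * fps_Exp h)"
    using assms by (simp add: deriv_Exp algebra_simps)
  show "fps_Exp (g + h) $ 0 = (fps_Exp g * fps_Exp h) $ 0"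
    by (simp add: Exp_0)
qed

lemma Exp_zero: "fps_Exp (0 :: 'b::{comm_ring_1,real_algebra_1} fps) = 1"
proof (rule ode_unique)
  show "fps_deriv (fps_Exp (0::'b fps)) = 0 * fps_Exp 0" using deriv_Exp[of "0::'b fps"] by simp
  show "fps_deriv (1::'b fps) = 0 * 1" by simp
  show "fps_Exp (0::'b fps) $ 0 = (1::'b fps) $ 0" by (simp add: Exp_0)
qed

lemma ln1p_0: "fps_ln1p b $ 0 = 0"
  by (simp add: fps_ln1p_def)

lemma deriv_ln1p:
  fixes b :: "'b::{comm_ring_1,real_algebra_1}"
  shows "fps_deriv (fps_ln1p b) = Abs_fps (\<lambda>n. (-1) ^ n * b ^ Suc n)"
proof (rule fps_ext)
  fix n
  have "of_nat (Suc n) * ((((-1) ^ n / real (Suc n)) *\<^sub>R b ^ Suc n)) = ((-1) ^ n :: real) *\<^sub>R (b ^ Suc n)"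
  proof -
    have "of_nat (Suc n) * ((((-1) ^ n / real (Suc n)) *\<^sub>R b ^ Suc n)) = (real (Suc n) * ((-1) ^ n / real (Suc n))) *\<^sub>R (b ^ Suc n)"
      by (simp only: scaleR_conv_of_real of_real_mult of_real_of_nat_eq mult.assoc)
    also have "real (Suc n) * ((-1) ^ n / real (Suc n)) = (-1) ^ n"
      by (simp del: of_nat_Suc)
    finally show ?thesis .
  qed
  also have "\<dots> = (-1) ^ n * b ^ Suc n"
    by (simp add: scaleR_conv_of_real)
  finally show "fps_deriv (fps_ln1p b) $ n = Abs_fps (\<lambda>n. (-1) ^ n * b ^ Suc n) $ n"
    by (simp add: fps_ln1p_def del: of_nat_Suc)
qed

lemma Exp_ln1p:
  fixes b :: "'b::{comm_ring_1,real_algebra_1}"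
  shows "fps_Exp (fps_ln1p b) = 1 + fps_const b * fps_X"
proof (rule ode_unique)
  show "fps_deriv (fps_Exp (fps_ln1p b)) = fps_deriv (fps_ln1p b) * fps_Exp (fps_ln1p b)"
    by (intro deriv_Exp ln1p_0)
  have "fps_deriv (fps_ln1p b) * (1 + fps_const b * fps_X) = fps_const b"
  proof (rule fps_ext)
    fix n
    show "(fps_deriv (fps_ln1p b) * (1 + fps_const b * fps_X)) $ n = fps_const b $ n"
      by (cases n) (simp_all add: deriv_ln1p algebra_simps fps_X_mult_nth)
  qed
  then show "fps_deriv (1 + fps_const b * fps_X) = fps_deriv (fps_ln1p b) * (1 + fps_const b * fps_X)"
    by simp
  show "fps_Exp (fps_ln1p b) $ 0 = (1 + fps_const b * fps_X) $ 0"
    by (simp add: Exp_0)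
qed

lemma Exp_sum:
  fixes G :: "nat \<Rightarrow> 'b::{comm_ring_1,real_algebra_1} fps"
  assumes "\<And>i. G i $ 0 = 0"
  shows "finite A \<Longrightarrow> fps_Exp (\<Sum>i\<in>A. G i) = (\<Prod>i\<in>A. fps_Exp (G i))"
proof (induction A rule: finite_induct)
  case empty then show ?case by (simp add: Exp_zero)
next
  case (insert x F)
  then show ?case using assms by (simp add: Exp_add fps_sum_nth)
qed

lemma Exp_nat_mult:
  fixes h :: "'b::{comm_ring_1,real_algebra_1} fps"
  assumes h0: "h $ 0 = 0"
  shows "fps_Exp (fps_const (of_nat m) * h) = fps_Exp h ^ m"
proof (induction m)
  case 0 then show ?case by (simp add: Exp_zero)
next
  case (Suc m)
  have "fps_const (of_nat (Suc m)) * h = h + fps_const (of_nat m) * h"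
    unfolding fps_of_nat by (simp add: algebra_simps)
  then show ?case using Suc h0 by (simp add: Exp_add)
qed

lemma Exp_neg:
  fixes h :: "'b::{comm_ring_1,real_algebra_1} fps"
  assumes h0: "h $ 0 = 0"
  shows "fps_Exp (- h) * fps_Exp h = 1"
  using h0 Exp_add[of "-h" h] by (simp add: Exp_zero)

lemma Exp_int_ln1p:
  fixes b :: "'b::{comm_ring_1,real_algebra_1}"
  shows "fps_Exp (fps_const (of_int n) * fps_ln1p b) * fps_of_poly ([:1, b:] ^ nat (- n))
         = fps_of_poly ([:1, b:] ^ nat n)"
proof (cases "n \<ge> 0")
  case True
  then have e: "fps_const (of_int n :: 'b) = fps_const (of_nat (nat n))" by simp
  have "nat (-n) = 0" using True by simp
  moreover have "fps_Exp (fps_const (of_int n) * fps_ln1p b) = (1 + fps_const b * fps_X) ^ nat n"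
    by (simp only: e Exp_nat_mult[OF ln1p_0] Exp_ln1p)
  ultimately show ?thesis
    by (simp add: Exp_nat_mult ln1p_0 Exp_ln1p fps_of_poly_power fps_of_poly_pCons)
next
  case False
  define H where "H = fps_const (of_nat (nat (-n)) :: 'b) * fps_ln1p b"
  have e: "fps_const (of_int n :: 'b) * fps_ln1p b = - H"
    using False by (simp add: H_def flip: fps_const_neg)
  have h0: "H $ 0 = 0" by (simp add: H_def ln1p_0)
  have x: "fps_Exp H = (1 + fps_const b * fps_X) ^ nat (- n)"
    unfolding H_def by (simp only: Exp_nat_mult[OF ln1p_0] Exp_ln1p)
  have "nat n = 0" using False by simp
  then show ?thesis
    using Exp_neg[OF h0] by (simp add: e x[symmetric] fps_of_poly_power fps_of_poly_pCons)
qed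

lemma hom_power: "unital_alg_hom F \<Longrightarrow> F (x ^ k) = F x ^ k"
  by (induction k) (auto simp: unital_alg_hom_def)

lemma map_ln1p:
  assumes "unital_alg_hom F"
  shows "fps_map_coeffs F (fps_ln1p a) = fps_ln1p (F a)"
proof -
  have l: "linear F" using assms by (simp add: unital_alg_hom_def)
  have "F 0 = 0" using linear_0[OF l] .
  then show ?thesis
    using l assms by (auto intro!: arg_cong[where f=Abs_fps] simp: fps_map_coeffs_def fps_ln1p_def linear_iff hom_power)
qed

lemma coeff_0_prod': "coeff (\<Prod>i\<in>A. P i) 0 = (\<Prod>i\<in>A. coeff (P i) 0)"
  by (induction A rule: infinite_finite_induct) (simp_all add: coeff_mult)

lemma degree_lin_power: "degree ([:1, c:] ^ m) \<le> m"
proof -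
  have d: "degree [:1, c:] \<le> 1" by (cases "c = 0") auto
  show ?thesis
    using order_trans[OF degree_power_le mult_right_mono[OF d, of m]] by simp
qed

theorem mainTheorem4:
  fixes fs :: "nat \<Rightarrow> 'a::{comm_ring_1,real_algebra_1} \<Rightarrow> 'b::{comm_ring_1,real_algebra_1}"
    and ns :: "nat \<Rightarrow> int" and r :: nat
  assumes "\<And>\<alpha>. \<alpha> < r \<Longrightarrow> unital_alg_hom (fs \<alpha>)"
  defines "f \<equiv> (\<lambda>x. \<Sum>\<alpha><r. of_int (ns \<alpha>) * fs \<alpha> x)"
    and "p \<equiv> nat (\<Sum>\<alpha>\<in>{\<alpha>. \<alpha> < r \<and> ns \<alpha> > 0}. ns \<alpha>)"
    and "q \<equiv> nat (- (\<Sum>\<alpha>\<in>{\<alpha>. \<alpha> < r \<and> ns \<alpha> < 0}. ns \<alpha>))"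
  shows "pq_hom p q f \<and> f 1 = of_int (\<Sum>\<alpha><r. ns \<alpha>) \<and> f 1 = of_int (int p - int q)"
proof -
  note hom = assms(1)
  have fin: "finite {\<alpha>. \<alpha> < r \<and> P \<alpha>}" for P by simp
  have p_eq: "p = (\<Sum>\<alpha><r. nat (ns \<alpha>))"
  proof -
    have "(\<Sum>\<alpha>\<in>{\<alpha>. \<alpha> < r \<and> ns \<alpha> > 0}. ns \<alpha>) = int (\<Sum>\<alpha>\<in>{\<alpha>. \<alpha> < r \<and> ns \<alpha> > 0}. nat (ns \<alpha>))"
      by (simp add: of_nat_sum)
    moreover have "(\<Sum>\<alpha>\<in>{\<alpha>. \<alpha> < r \<and> ns \<alpha> > 0}. nat (ns \<alpha>)) = (\<Sum>\<alpha><r. nat (ns \<alpha>))"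
      by (intro sum.mono_neutral_left) auto
    ultimately show ?thesis unfolding p_def by (metis nat_int)
  qed
  have q_eq: "q = (\<Sum>\<alpha><r. nat (- ns \<alpha>))"
  proof -
    have "- (\<Sum>\<alpha>\<in>{\<alpha>. \<alpha> < r \<and> ns \<alpha> < 0}. ns \<alpha>) = int (\<Sum>\<alpha>\<in>{\<alpha>. \<alpha> < r \<and> ns \<alpha> < 0}. nat (- ns \<alpha>))"
      by (simp add: of_nat_sum sum_negf)
    moreover have "(\<Sum>\<alpha>\<in>{\<alpha>. \<alpha> < r \<and> ns \<alpha> < 0}. nat (- ns \<alpha>)) = (\<Sum>\<alpha><r. nat (- ns \<alpha>))"
      by (intro sum.mono_neutral_left) auto
    ultimately show ?thesis unfolding q_def by (metis nat_int)
  qed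
  have sum_eq: "(\<Sum>\<alpha><r. ns \<alpha>) = int p - int q"
  proof -
    have "(\<Sum>\<alpha><r. ns \<alpha>) = (\<Sum>\<alpha><r. int (nat (ns \<alpha>)) - int (nat (- ns \<alpha>)))"
      by (intro sum.cong) auto
    then show ?thesis by (simp add: p_eq q_eq of_nat_sum sum_subtractf)
  qed
  have f1: "f 1 = of_int (\<Sum>\<alpha><r. ns \<alpha>)"
    using hom by (simp add: f_def unital_alg_hom_def)
  have lin: "linear f"
  proof -
    have l: "\<alpha> < r \<Longrightarrow> linear (fs \<alpha>)" for \<alpha> using hom by (simp add: unital_alg_hom_def)
    show ?thesis
      unfolding linear_iff f_def
      using l by (auto simp: linear_iff sum.distrib distrib_left scaleR_sum_right mult_scaleR_right
           intro!: sum.cong)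
  qed
  have char: "\<exists>P Q :: 'b poly. degree P \<le> p \<and> degree Q \<le> q \<and> coeff Q 0 = 1 \<and>
            char_fun f a * fps_of_poly Q = fps_of_poly P" for a
  proof -
    define b where "b \<alpha> = fs \<alpha> a" for \<alpha>
    define G where "G \<alpha> = fps_const (of_int (ns \<alpha>)) * fps_ln1p (b \<alpha>)" for \<alpha>
    define P where "P = (\<Prod>\<alpha><r. [:1, b \<alpha>:] ^ nat (ns \<alpha>))"
    define Q where "Q = (\<Prod>\<alpha><r. [:1, b \<alpha>:] ^ nat (- ns \<alpha>))"
    have map: "fps_map_coeffs f (fps_ln1p a) = (\<Sum>\<alpha><r. G \<alpha>)"
    proof (rule fps_ext)
      fix k
      have "fps_map_coeffs f (fps_ln1p a) $ k = (\<Sum>\<alpha><r. of_int (ns \<alpha>) * fps_map_coeffs (fs \<alpha>) (fps_ln1p a) $ k)"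
        by (simp add: fps_map_coeffs_def f_def)
      also have "\<dots> = (\<Sum>\<alpha><r. G \<alpha> $ k)"
        using hom by (intro sum.cong refl) (simp add: map_ln1p G_def b_def)
      finally show "fps_map_coeffs f (fps_ln1p a) $ k = (\<Sum>\<alpha><r. G \<alpha>) $ k"
        by (simp add: fps_sum_nth)
    qed
    have "char_fun f a * fps_of_poly Q = (\<Prod>\<alpha><r. fps_Exp (G \<alpha>)) * (\<Prod>\<alpha><r. fps_of_poly ([:1, b \<alpha>:] ^ nat (- ns \<alpha>)))"
      unfolding char_fun_def map Q_def fps_of_poly_prod
      by (subst Exp_sum) (simp_all add: G_def ln1p_0)
    also have "\<dots> = (\<Prod>\<alpha><r. fps_Exp (G \<alpha>) * fps_of_poly ([:1, b \<alpha>:] ^ nat (- ns \<alpha>)))"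
      by (simp add: prod.distrib)
    also have "\<dots> = fps_of_poly P"
      unfolding P_def fps_of_poly_prod G_def by (simp add: Exp_int_ln1p)
    finally have e: "char_fun f a * fps_of_poly Q = fps_of_poly P" .
    have dP: "degree P \<le> p"
    proof -
      have "degree P \<le> (\<Sum>\<alpha><r. degree ([:1, b \<alpha>:] ^ nat (ns \<alpha>)))"
        unfolding P_def using degree_prod_sum_le[of "{..<r}"] by (simp add: o_def)
      also have "\<dots> \<le> (\<Sum>\<alpha><r. nat (ns \<alpha>))"
      proof (intro sum_mono)
        fix \<alpha> show "degree ([:1, b \<alpha>:] ^ nat (ns \<alpha>)) \<le> nat (ns \<alpha>)"
          by (rule degree_lin_power)
      qed
      finally show ?thesis by (simp add: p_eq)
    qed
    have dQ: "degree Q \<le> q"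
    proof -
      have "degree Q \<le> (\<Sum>\<alpha><r. degree ([:1, b \<alpha>:] ^ nat (- ns \<alpha>)))"
        unfolding Q_def using degree_prod_sum_le[of "{..<r}"] by (simp add: o_def)
      also have "\<dots> \<le> (\<Sum>\<alpha><r. nat (- ns \<alpha>))"
      proof (intro sum_mono)
        fix \<alpha> show "degree ([:1, b \<alpha>:] ^ nat (- ns \<alpha>)) \<le> nat (- ns \<alpha>)"
          by (rule degree_lin_power)
      qed
      finally show ?thesis by (simp add: q_eq)
    qed
    have cQ: "coeff Q 0 = 1"
      unfolding Q_def by (simp add: coeff_0_prod' coeff_0_power)
    show ?thesis using e dP dQ cQ by blast
  qed
  show ?thesis
    using lin char f1 sum_eq by (simp add: pq_hom_def)
qed

end
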